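(* Let $q$ be an odd prime power with characteristic $p$, let $1\le n\le q^2-1$, and write $n=u+vq$ with $0\le u,v\le q-1$. Define \[ \mathrm{III}=\sum_{\substack{\alpha,\beta\ge 0,\ \beta\le q-2\\ 0<\alpha+\beta\le q-1}}\ \sum_{\substack{k\ge 1,\ j\ge 0\\ k+j\le q-1\\ 2k-j\equiv\alpha+\beta\pmod{q-1}\\ q(q-1)+k-j-(\alpha+\beta q)=n}}\binom{\alpha+\beta}{\alpha}\binom{q-1-k}{j}(-1)^j . \] Then in $\mathbb F_p$, \[ \mathrm{III}=\sum_{\substack{-1\le s\le 1\\ \max\{s-\frac{u+v}{q-1},\,v-q+1\}\le\epsilon<\min\{s-\frac{u+v}{q-1}+1,\,v\}}}(-1)^{v+\epsilon}\binom{u+2v-(s-\epsilon)(q-1)-\epsilon}{(s-2\epsilon+1)(q-1)-2u-v-\epsilon} -\sum_{\max\{-2,\,v-q+\frac{u+v}{q-1}\}<s\le\min\{1,\,v-q+\frac{u+v}{q-1}+1\}}\binom{u+v-(s-v+q-1)(q-1)}{(s-2v+2q)(q-1)-2(u+v)}, \] the sums being over integers $s,\epsilon$ in the indicated ranges.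
   Context: For integers $m\ge 0$ and $k$, $\binom mk$ is the usual binomial coefficient, equal to $0$ unless $0\le k\le m$; integers are interpreted in $\mathbb F_p$. *)

theory Defs
  imports "HOL-Number_Theory.Number_Theory"
begin

definition ibinom :: "int \<Rightarrow> int \<Rightarrow> int" where
  "ibinom m k = (if 0 \<le> k \<and> k \<le> m then int (nat m choose nat k) else 0)"

text \<open>The sum III (as an integer; its image in F_p is what the lemma is about).\<close>
definition sumIII :: "int \<Rightarrow> int \<Rightarrow> int" where
  "sumIII q n =
     (\<Sum>(\<alpha>, \<beta>, k, j) \<in> {(\<alpha>, \<beta>, k, j). 0 \<le> \<alpha> \<and> 0 \<le> \<beta> \<and> \<beta> \<le> q - 2 \<and>
            0 < \<alpha> + \<beta> \<and> \<alpha> + \<beta> \<le> q - 1 \<and>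
            1 \<le> k \<and> 0 \<le> j \<and> k + j \<le> q - 1 \<and>
            [2 * k - j = \<alpha> + \<beta>] (mod (q - 1)) \<and>
            q * (q - 1) + k - j - (\<alpha> + \<beta> * q) = n}.
        ibinom (\<alpha> + \<beta>) \<alpha> * ibinom (q - 1 - k) j * (-1) ^ nat j)"

definition rhsIII :: "int \<Rightarrow> int \<Rightarrow> int \<Rightarrow> int" where
  "rhsIII q u v =
     (\<Sum>(s, \<epsilon>) \<in> {(s, \<epsilon>). -1 \<le> s \<and> s \<le> 1 \<and>
          max (real_of_int s - real_of_int (u + v) / real_of_int (q - 1)) (real_of_int (v - q + 1))
            \<le> real_of_int \<epsilon> \<and>
          real_of_int \<epsilon> <
          min (real_of_int s - real_of_int (u + v) / real_of_int (q - 1) + 1) (real_of_int v)}.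
        (if even (v + \<epsilon>) then 1 else -1) *
        ibinom (u + 2 * v - (s - \<epsilon>) * (q - 1) - \<epsilon>)
               ((s - 2 * \<epsilon> + 1) * (q - 1) - 2 * u - v - \<epsilon>))
   - (\<Sum>s \<in> {s. max (-2) (real_of_int (v - q) + real_of_int (u + v) / real_of_int (q - 1))
                   < real_of_int s \<and>
                 real_of_int s \<le>
                   min 1 (real_of_int (v - q) + real_of_int (u + v) / real_of_int (q - 1) + 1)}.
        ibinom (u + v - (s - v + q - 1) * (q - 1))
               ((s - 2 * v + 2 * q) * (q - 1) - 2 * (u + v)))"

end

theory Submission
  imports Defs "HOL-Computational_Algebra.Formal_Power_Series"
begin

definition G :: "int \<Rightarrow> nat \<Rightarrow> int" where
  "G x k = (if 0 \<le> x then int (nat x choose k) else (-1)^k * int (nat (int k - x - 1) choose k))"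

lemma G_rat: "rat_of_int (G x k) = (rat_of_int x) gchoose k"
proof (cases "0 \<le> x")
  case True
  then obtain n where n: "x = int n" by (metis nonneg_eq_int)
  show ?thesis using True unfolding G_def n
    by (simp add: binomial_gbinomial[symmetric])
next
  case False
  define n where "n = nat (int k - x - 1)"
  have n: "int k - x - 1 = int n" using False unfolding n_def by simp
  have "(rat_of_int x) gchoose k = (-1)^k * ((of_nat k - rat_of_int x - 1) gchoose k)"
    by (rule gbinomial_negated_upper)
  also have "of_nat k - rat_of_int x - 1 = of_nat n"
    using arg_cong[OF n, of rat_of_int] by simp
  finally show ?thesis using False unfolding G_def n
    by (simp add: binomial_gbinomial[symmetric] n_def[symmetric])
qed

lemma G_eqI: "rat_of_int a = rat_of_int b \<Longrightarrow> a = b" by simp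

lemma G_nat: "0 \<le> x \<Longrightarrow> G x k = int (nat x choose k)"
  by (simp add: G_def)

lemma G_of_nat: "G (int n) k = int (n choose k)"
  by (simp add: G_def)

lemma G_0 [simp]: "G x 0 = 1"
  by (rule G_eqI) (simp add: G_rat)

lemma G_zero: "0 \<le> x \<Longrightarrow> x < int k \<Longrightarrow> G x k = 0"
  by (simp add: G_def binomial_eq_0)

lemma G_pascal: "G (x + 1) (Suc k) = G x k + G x (Suc k)"
  by (rule G_eqI) (simp add: G_rat gbinomial_Suc_Suc)

lemma G_neg: "G x k = (-1)^k * G (int k - x - 1) k"
  by (rule G_eqI) (simp add: G_rat gbinomial_negated_upper[of "rat_of_int x"])

lemma G_vander: "G (x + y) n = (\<Sum>k=0..n. G x k * G y (n - k))"
proof (rule G_eqI)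
  have "rat_of_int (G (x + y) n) = (rat_of_int x + rat_of_int y) gchoose n" by (simp add: G_rat)
  also have "\<dots> = (\<Sum>k=0..n. (rat_of_int x gchoose k) * (rat_of_int y gchoose (n - k)))"
    by (rule gbinomial_Vandermonde[symmetric])
  also have "\<dots> = rat_of_int (\<Sum>k=0..n. G x k * G y (n - k))" by (simp add: G_rat)
  finally show "rat_of_int (G (x + y) n) = rat_of_int (\<Sum>k=0..n. G x k * G y (n - k))" .
qed

lemma dvd_choose_ppow:
  assumes p: "prime (p::nat)" and i: "0 < i" "i < p^m"
  shows "p dvd (p^m choose i)"
proof (rule ccontr)
  assume np: "\<not> p dvd (p^m choose i)"
  obtain N where N: "p^m = Suc N" using i by (cases "p^m") auto
  obtain i' where i': "i = Suc i'" using i by (cases i) auto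
  have "Suc N * (N choose i') = (Suc N choose Suc i') * Suc i'" by (rule Suc_times_binomial_eq)
  hence "p^m dvd (p^m choose i) * i" using N i' by (metis dvd_triv_left)
  moreover have "coprime (p^m) (p^m choose i)"
    using np p by (simp add: coprime_commute prime_imp_coprime)
  ultimately have "p^m dvd i" using coprime_dvd_mult_right_iff by blast
  thus False using i by (simp add: nat_dvd_not_less)
qed

lemma G_shift:
  assumes p: "prime (p::nat)" and q: "q = p^m"
  shows "[G (x + int q) k = G x k + (if q \<le> k then G x (k - q) else 0)] (mod int p)"
proof -
  have "G (x + int q) k = G (int q + x) k" by (simp add: add.commute)
  also have "\<dots> = (\<Sum>i=0..k. G (int q) i * G x (k - i))" by (rule G_vander)
  finally have e: "G (x + int q) k = (\<Sum>i=0..k. int (q choose i) * G x (k - i))" by (simp add: G_of_nat)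
  have c: "[int (q choose i) * G x (k - i) = (if i = 0 then G x k else if i = q then G x (k - q) else 0)] (mod int p)"
    if "i \<in> {0..k}" for i
  proof (cases "i = 0")
    case True then show ?thesis by simp
  next
    case False
    show ?thesis
    proof (cases "i = q")
      case True then show ?thesis using False by simp
    next
      case F2: False
      show ?thesis
      proof (cases "i < q")
        case True
        have "p dvd (q choose i)" using dvd_choose_ppow[OF p, of i m] True False q by simp
        hence "int p dvd int (q choose i) * G x (k - i)" by simp
        thus ?thesis using False F2 by (simp add: cong_0_iff)
      next
        case False
        hence "q choose i = 0" using F2 by (simp add: binomial_eq_0)
        hence e0: "int (q choose i) * G x (k - i) = 0" by simp
        show ?thesis using F2 \<open>i \<noteq> 0\<close> by (subst e0) simp
      qed
    qed
  qed
  have "[(\<Sum>i=0..k. int (q choose i) * G x (k - i)) =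
         (\<Sum>i=0..k. (if i = 0 then G x k else if i = q then G x (k - q) else 0))] (mod int p)"
    by (rule cong_sum) (use c in auto)
  moreover have "(\<Sum>i=0..k. (if i = 0 then G x k else if i = q then G x (k - q) else 0)) =
       G x k + (if q \<le> k then G x (k - q) else 0)"
  proof -
    have q0: "q \<noteq> 0" using q p by (simp add: prime_gt_0_nat)
    have "(\<Sum>i=0..k. (if i = 0 then G x k else if i = q then G x (k - q) else 0)) =
          (\<Sum>i=0..k. (if i = 0 then G x k else 0)) + (\<Sum>i=0..k. (if i = q then G x (k - q) else 0))"
      by (subst sum.distrib[symmetric]) (rule sum.cong, auto simp: q0)
    also have "\<dots> = G x k + (if q \<le> k then G x (k - q) else 0)"
      by (simp add: sum.delta)
    finally show ?thesis .
  qed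
  ultimately show ?thesis using e by simp
qed

lemma G_per1:
  assumes p: "prime (p::nat)" and q: "q = p^m" and k: "k < q"
  shows "[G (x + int q) k = G x k] (mod int p)"
  using G_shift[OF p q, of x k] k by simp

lemma G_per_nat:
  assumes p: "prime (p::nat)" and q: "q = p^m" and k: "k < q"
  shows "[G (x + int c * int q) k = G x k] (mod int p)"
proof (induction c)
  case 0 then show ?case by simp
next
  case (Suc c)
  have "G (x + int (Suc c) * int q) k = G ((x + int c * int q) + int q) k" by (simp add: algebra_simps)
  also have "[\<dots> = G (x + int c * int q) k] (mod int p)" by (rule G_per1[OF p q k])
  finally show ?case using Suc.IH by (rule cong_trans)
qed

lemma G_per:
  assumes p: "prime (p::nat)" and q: "q = p^m" and k: "k < q"
  shows "[G (x + c * int q) k = G x k] (mod int p)"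
proof (cases "0 \<le> c")
  case True
  then obtain c' where "c = int c'" by (metis nonneg_eq_int)
  then show ?thesis using G_per_nat[OF p q k] by simp
next
  case False
  then obtain c' where c': "c = - int c'" by (metis neg_int_cases less_le_not_le not_le nonneg_eq_int add.inverse_inverse)
  have "[G ((x + c * int q) + int c' * int q) k = G (x + c * int q) k] (mod int p)" by (rule G_per_nat[OF p q k])
  hence "[G x k = G (x + c * int q) k] (mod int p)" using c' by (simp add: algebra_simps)
  thus ?thesis by (rule cong_sym)
qed

definition Bi :: "int \<Rightarrow> int \<Rightarrow> int" where
  "Bi x k = (if k < 0 then 0 else G x (nat k))"

lemma Bi_nat: "0 \<le> x \<Longrightarrow> Bi x k = ibinom x k"
  by (auto simp: Bi_def ibinom_def G_nat binomial_eq_0 nat_less_eq_zless)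

lemma ibinom_Bi: "0 \<le> x \<Longrightarrow> ibinom x k = Bi x k"
  by (simp add: Bi_nat)

lemma Bi_neg_k [simp]: "k < 0 \<Longrightarrow> Bi x k = 0" by (simp add: Bi_def)

lemma Bi_0 [simp]: "Bi x 0 = 1" by (simp add: Bi_def)

lemma Bi_zero: "0 \<le> x \<Longrightarrow> x < k \<Longrightarrow> Bi x k = 0"
  by (simp add: Bi_def G_zero)

lemma Bi_neg: "0 \<le> k \<Longrightarrow> Bi x k = (-1)^nat k * Bi (k - x - 1) k"
proof -
  assume k: "0 \<le> k"
  have "G x (nat k) = (-1)^nat k * G (int (nat k) - x - 1) (nat k)" by (rule G_neg)
  thus ?thesis using k by (simp add: Bi_def)
qed

lemma Bi_sym: "0 \<le> k \<Longrightarrow> k \<le> x \<Longrightarrow> Bi x k = Bi x (x - k)"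
proof -
  assume a: "0 \<le> k" "k \<le> x"
  have "nat x choose nat k = nat x choose (nat x - nat k)" using a by (intro binomial_symmetric nat_mono)
  thus ?thesis using a by (simp add: Bi_def G_nat nat_diff_distrib)
qed

context
  fixes p m :: nat and q :: int
  assumes p: "prime p" and q: "q = int p ^ m"
begin

lemma qpos: "q > 0" using q p prime_gt_0_nat by auto

lemma Bi_shift: "[Bi (x + q) k = Bi x k + Bi x (k - q)] (mod int p)"
proof (cases "k < 0")
  case True
  then show ?thesis using qpos by simp
next
  case False
  have q': "q = int (p^m)" using q by simp
  have e1: "[G (x + int (p^m)) (nat k) = G x (nat k) + (if p^m \<le> nat k then G x (nat k - p^m) else 0)] (mod int p)"
    by (rule G_shift[OF p refl])
  have e2: "Bi x (k - q) = (if p^m \<le> nat k then G x (nat k - p^m) else 0)"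
  proof (cases "p^m \<le> nat k")
    case True
    hence kq: "int (p^m) \<le> k" using False by linarith
    hence "p^m \<le> nat k" by linarith
    hence "int (nat k - p^m) = int (nat k) - int (p^m)" by (rule of_nat_diff)
    hence "k - q = int (nat k - p^m)" using False q' by simp
    hence "nat (k - q) = nat k - p^m" by simp
    moreover have "\<not> k - q < 0" using kq q' by simp
    ultimately show ?thesis using True unfolding Bi_def by simp
  next
    case F: False
    hence "k < int (p^m)" using False by (simp add: not_le nat_less_iff)
    hence "k - q < 0" using q' by simp
    thus ?thesis using F by simp
  qed
  have e3: "Bi (x + q) k = G (x + int (p^m)) (nat k)" and e4: "Bi x k = G x (nat k)"
    using False q' unfolding Bi_def by (simp_all only: if_False not_less[symmetric])
  show ?thesis unfolding e2 e3 e4 by (rule e1)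
qed

lemma Bi_per: "0 \<le> k \<Longrightarrow> k < q \<Longrightarrow> [Bi (x + c * q) k = Bi x k] (mod int p)"
proof -
  assume k: "0 \<le> k" "k < q"
  have q': "q = int (p^m)" using q by simp
  have nk: "nat k < p^m" using k q' by (simp add: nat_less_iff)
  have e1: "[G (x + c * int (p^m)) (nat k) = G x (nat k)] (mod int p)"
    by (rule G_per[OF p refl nk])
  have e3: "Bi (x + c * q) k = G (x + c * int (p^m)) (nat k)" and e4: "Bi x k = G x (nat k)"
    using k q' unfolding Bi_def by (simp_all only: if_False not_less[symmetric])
  show ?thesis unfolding e3 e4 by (rule e1)
qed

end

lemma vander_up_nat:
  "(\<Sum>j=0..a. G (int (k + j)) k * G (int (a - j + b)) b) = G (int (a + b + k + 1)) a"
proof -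
  have e1: "G (int (k + j)) k = (-1)^j * G (- int k - 1) j" for j
  proof -
    have "G (int (k + j)) k = int ((k+j) choose k)" by (rule G_of_nat)
    also have "\<dots> = int ((k+j) choose j)" by (metis add_diff_cancel_left' binomial_symmetric le_add1)
    also have "\<dots> = G (int (k + j)) j" by (rule G_of_nat[symmetric])
    also have "\<dots> = (-1)^j * G (int j - int (k + j) - 1) j" by (rule G_neg)
    finally show ?thesis by simp
  qed
  have e2: "G (int (a - j + b)) b = (-1)^(a-j) * G (- int b - 1) (a - j)" if "j \<le> a" for j
  proof -
    have "G (int (a - j + b)) b = int ((a - j + b) choose b)" by (rule G_of_nat)
    also have "\<dots> = int ((a - j + b) choose (a - j))" by (metis add_diff_cancel_right' binomial_symmetric le_add2)
    also have "\<dots> = G (int (a - j + b)) (a - j)" by (rule G_of_nat[symmetric])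
    also have "\<dots> = (-1)^(a-j) * G (int (a - j) - int (a - j + b) - 1) (a - j)" by (rule G_neg)
    finally show ?thesis using that by simp
  qed
  have "(\<Sum>j=0..a. G (int (k + j)) k * G (int (a - j + b)) b)
      = (\<Sum>j=0..a. (-1)^a * (G (- int k - 1) j * G (- int b - 1) (a - j)))"
  proof (rule sum.cong)
    fix j assume "j \<in> {0..a}"
    hence j: "j \<le> a" by simp
    have pw: "(-1::int)^j * (-1)^(a-j) = (-1)^a" using j by (simp add: power_add[symmetric])
    have "G (int (k + j)) k * G (int (a - j + b)) b = ((-1)^j * G (- int k - 1) j) * ((-1)^(a-j) * G (- int b - 1) (a - j))"
      by (simp only: e1 e2[OF j])
    also have "\<dots> = ((-1::int)^j * (-1)^(a-j)) * (G (- int k - 1) j * G (- int b - 1) (a - j))"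
      by (simp only: mult_ac)
    finally show "G (int (k + j)) k * G (int (a - j + b)) b = (-1)^a * (G (- int k - 1) j * G (- int b - 1) (a - j))"
      by (simp only: pw)
  qed simp
  also have "\<dots> = (-1)^a * G ((- int k - 1) + (- int b - 1)) a"
    by (simp only: G_vander[of "- int k - 1" "- int b - 1" a] sum_distrib_left)
  also have "\<dots> = G (int (a + b + k + 1)) a"
  proof -
    have arg: "int a - int (a + b + k + 1) - 1 = (- int k - 1) + (- int b - 1)" by simp
    have "G (int (a + b + k + 1)) a = (-1)^a * G (int a - int (a + b + k + 1) - 1) a"
      by (rule G_neg)
    thus ?thesis unfolding arg by (rule sym)
  qed
  finally show ?thesis .
qed

definition Phi :: "int \<Rightarrow> int \<Rightarrow> int" where
  "Phi q N = (if 0 \<le> N div q \<and> N div q \<le> q - 2 \<and> 0 < N mod q + N div q \<and> N mod q + N div q \<le> q - 1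
              then ibinom (N mod q + N div q) (N mod q) else 0)"

lemma divmod_unique:
  fixes a b q :: int
  assumes "0 \<le> a" "a < q"
  shows "(a + b * q) div q = b" "(a + b * q) mod q = a"
  using assms by simp_all

locale LS =
  fixes p m :: nat and q n u v :: int
  assumes p: "prime p" and podd: "odd p" and m1: "m \<ge> 1" and q: "q = int p ^ m"
    and n1: "1 \<le> n" and nq: "n \<le> q^2 - 1"
    and u0: "0 \<le> u" and uq: "u \<le> q - 1" and v0: "0 \<le> v" and vq: "v \<le> q - 1"
    and nuv: "n = u + v * q"
begin

definition "rr = (u + v) mod (q - 1)"
definition "tt = (u + v) div (q - 1)"
definition "kk = q - 1 - rr"
definition "N0 = q * (q - 1) + kk - n"

lemma q3: "q \<ge> 3"
proof -
  have "p \<ge> 2" using p prime_ge_2_nat by blast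
  hence "p \<ge> 3" using podd by presburger
  have "p ^ 1 \<le> p ^ m" using m1 \<open>p \<ge> 3\<close> by (intro power_increasing) auto
  hence "int p \<le> int p ^ m" by (metis of_nat_le_iff of_nat_power power_one_right)
  thus ?thesis using \<open>p \<ge> 3\<close> q by linarith
qed

lemma qodd: "odd q"
  using podd q by simp

lemma rr_bounds: "0 \<le> rr" "rr < q - 1" using q3 by (simp_all add: rr_def)

lemma kk_bounds: "1 \<le> kk" "kk \<le> q - 1" using rr_bounds by (simp_all add: kk_def)

lemma uv_tt: "u + v = tt * (q - 1) + rr"
  using div_mult_mod_eq[of "u + v" "q - 1"] by (simp add: tt_def rr_def)

lemma tt_bounds: "0 \<le> tt" "tt \<le> 2"
proof -
  show "0 \<le> tt" using u0 v0 q3 by (simp add: tt_def pos_imp_zdiv_nonneg_iff)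
  have e: "tt * (q - 1) = u + v - rr" using uv_tt by simp
  have e2: "u + v \<le> 2 * (q - 1)" using add_mono[OF uq vq] by simp
  have "tt * (q - 1) \<le> 2 * (q - 1)" unfolding e using rr_bounds(1) e2 by linarith
  show "tt \<le> 2"
  proof (rule ccontr)
    assume "\<not> tt \<le> 2"
    hence "3 \<le> tt" by simp
    hence "3 * (q - 1) \<le> tt * (q - 1)" using q3 by (intro mult_right_mono) auto
    thus False using \<open>tt * (q - 1) \<le> 2 * (q - 1)\<close> q3 by simp
  qed
qed

lemma k_unique:
  assumes k: "1 \<le> k" "k \<le> q - 1" and c: "[2 * k - j = \<alpha> + \<beta>] (mod (q - 1))"
    and e: "q * (q - 1) + k - j - (\<alpha> + \<beta> * q) = n"
  shows "k = kk"
proof -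
  have "(q - 1) dvd (2 * k - j - (\<alpha> + \<beta>))" using c by (simp add: cong_iff_dvd_diff)
  moreover have "2 * k - j - (\<alpha> + \<beta>) = (k - kk) + (q - 1) * (tt + 1 + v - q + \<beta>)"
  proof -
    have "\<alpha> + \<beta> * q = q * (q - 1) + k - j - n" using e by simp
    hence "\<alpha> + \<beta> = q * (q - 1) + k - j - n - \<beta> * (q - 1)" by (simp add: algebra_simps)
    thus ?thesis using uv_tt nuv unfolding kk_def by (simp add: algebra_simps)
  qed
  ultimately have d: "(q - 1) dvd (k - kk)" by (simp add: dvd_add_left_iff)
  show ?thesis
  proof (rule ccontr)
    assume "k \<noteq> kk"
    hence "k - kk > 0 \<or> kk - k > 0" by linarith
    moreover have "(q - 1) dvd (kk - k)" using d by (metis dvd_minus_iff minus_diff_eq)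
    ultimately have "q - 1 \<le> k - kk \<or> q - 1 \<le> kk - k" using d zdvd_imp_le by blast
    thus False using k kk_bounds by linarith
  qed
qed

definition "PP j \<longleftrightarrow> (let N = N0 - int j in 0 \<le> N div q \<and> N div q \<le> q - 2 \<and> 0 < N mod q + N div q \<and> N mod q + N div q \<le> q - 1)"

lemma D1: "sumIII q n = (\<Sum>j=0..nat rr. ibinom rr (int j) * (-1)^j * Phi q (N0 - int j))"
proof -
  let ?S = "{(\<alpha>, \<beta>, k, j). 0 \<le> \<alpha> \<and> 0 \<le> \<beta> \<and> \<beta> \<le> q - 2 \<and>
            0 < \<alpha> + \<beta> \<and> \<alpha> + \<beta> \<le> q - 1 \<and>
            1 \<le> k \<and> 0 \<le> j \<and> k + j \<le> q - 1 \<and>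
            [2 * k - j = \<alpha> + \<beta>] (mod (q - 1)) \<and>
            q * (q - 1) + k - j - (\<alpha> + \<beta> * q) = n}"
  let ?T = "{j \<in> {0..nat rr}. PP j}"
  let ?f = "\<lambda>(\<alpha>, \<beta>, k, j). ibinom (\<alpha> + \<beta>) \<alpha> * ibinom (q - 1 - k) j * (-1) ^ nat (j::int)"
  let ?h = "\<lambda>j::nat. ((N0 - int j) mod q, (N0 - int j) div q, kk, int j)"
  let ?g = "\<lambda>j::nat. ibinom rr (int j) * (-1)^j * Phi q (N0 - int j)"
  have qpos: "q > 0" using q3 by simp
  have "sumIII q n = sum ?f ?S" by (simp add: sumIII_def)
  also have "\<dots> = sum ?g ?T"
  proof (rule sum.reindex_bij_witness[where i = ?h and j = "\<lambda>(\<alpha>, \<beta>, k, j). nat j"])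
    fix a assume a: "a \<in> ?S"
    obtain \<alpha> \<beta> k j where aa: "a = (\<alpha>, \<beta>, k, j)" by (cases a) auto
    have A: "0 \<le> \<alpha>" "0 \<le> \<beta>" "\<beta> \<le> q - 2" "0 < \<alpha> + \<beta>" "\<alpha> + \<beta> \<le> q - 1" "1 \<le> k" "0 \<le> j"
      "k + j \<le> q - 1" "[2 * k - j = \<alpha> + \<beta>] (mod (q - 1))" "q * (q - 1) + k - j - (\<alpha> + \<beta> * q) = n"
      using a aa by auto
    have kk: "k = kk" using k_unique[OF A(6) _ A(9) A(10)] A by linarith
    have N: "N0 - int (nat j) = \<alpha> + \<beta> * q" using A(7,10) kk by (simp add: N0_def)
    have dm: "(N0 - int (nat j)) div q = \<beta>" "(N0 - int (nat j)) mod q = \<alpha>"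
      unfolding N using divmod_unique[of \<alpha> q \<beta>] A by auto
    show "?h ((\<lambda>(\<alpha>, \<beta>, k, j). nat j) a) = a" using aa dm kk A(7) by simp
    show "(\<lambda>(\<alpha>, \<beta>, k, j). nat j) a \<in> ?T"
      using aa dm A kk unfolding PP_def Let_def kk_def by auto
    show "?g ((\<lambda>(\<alpha>, \<beta>, k, j). nat j) a) = ?f a"
    proof -
      have "q - 1 - k = rr" using kk kk_def by simp
      moreover have "Phi q (N0 - int (nat j)) = ibinom (\<alpha> + \<beta>) \<alpha>"
        unfolding Phi_def dm using A by simp
      ultimately show ?thesis using aa A(7) by (simp add: nat_power_eq)
    qed
  next
    fix b assume b: "b \<in> ?T"
    show "(\<lambda>(\<alpha>, \<beta>, k, j). nat j) (?h b) = b" by simp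
    have B: "b \<le> nat rr" "PP b" using b by auto
    define N where "N = N0 - int b"
    have P: "0 \<le> N div q" "N div q \<le> q - 2" "0 < N mod q + N div q" "N mod q + N div q \<le> q - 1"
      using B(2) unfolding PP_def Let_def N_def by auto
    have m0: "0 \<le> N mod q" using qpos by simp
    have Ndm: "N mod q + N div q * q = N" by simp
    have cg: "[2 * kk - int b = N mod q + N div q] (mod (q - 1))"
    proof -
      have "2 * kk - int b - (N mod q + N div q) = (q - 1) * (tt + 1 + v - q + N div q)"
      proof -
        have "N mod q + N div q = N - N div q * (q - 1)" using Ndm by (simp add: algebra_simps)
        thus ?thesis using uv_tt nuv unfolding N_def N0_def kk_def by (simp add: algebra_simps)
      qed
      thus ?thesis by (simp add: cong_iff_dvd_diff)
    qed
    have "q * (q - 1) + kk - int b - (N mod q + N div q * q) = n"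
      using Ndm unfolding N_def N0_def by simp
    thus "?h b \<in> ?S" using P m0 cg B(1) kk_bounds rr_bounds unfolding N_def kk_def by auto
  qed
  also have "\<dots> = (\<Sum>j=0..nat rr. if PP j then ?g j else 0)" by (rule sum.inter_filter) simp
  also have "\<dots> = (\<Sum>j=0..nat rr. ?g j)"
    by (rule sum.cong) (auto simp: PP_def Phi_def Let_def)
  finally show ?thesis .
qed

lemma qpos': "q > 0" using q3 by simp

lemma D2a: "j \<le> nat rr \<Longrightarrow> [ibinom rr (int j) * (-1)^j = Bi (kk + int j) kk] (mod int p)"
proof -
  assume j: "j \<le> nat rr"
  have e1: "ibinom rr (int j) = Bi rr (int j)" using rr_bounds by (simp add: ibinom_Bi)
  have e2: "Bi rr (int j) = (-1)^j * Bi (int j - rr - 1) (int j)" using Bi_neg[of "int j" rr] by simp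
  have "ibinom rr (int j) * (-1)^j = ((-1)^j * (-1)^j) * Bi (int j - rr - 1) (int j)"
    unfolding e1 e2 by (simp add: mult_ac)
  also have "\<dots> = Bi (int j - rr - 1) (int j)" by (simp add: power_add[symmetric])
  also have "int j - rr - 1 = (kk + int j) + (-1) * q" by (simp add: kk_def)
  finally have e3: "ibinom rr (int j) * (-1)^j = Bi ((kk + int j) + (-1) * q) (int j)" .
  have "[Bi ((kk + int j) + (-1) * q) (int j) = Bi (kk + int j) (int j)] (mod int p)"
    using Bi_per[OF p q, of "int j" "kk + int j" "-1"] j rr_bounds by linarith
  moreover have "Bi (kk + int j) (int j) = Bi (kk + int j) kk"
    using Bi_sym[of "int j" "kk + int j"] kk_bounds by simp
  ultimately show ?thesis unfolding e3 by simp
qed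

lemma D2b: "nat rr < j \<Longrightarrow> j \<le> nat (q - 1) \<Longrightarrow> [Bi (kk + int j) kk = 0] (mod int p)"
proof -
  assume j: "nat rr < j" "j \<le> nat (q - 1)"
  have "[Bi ((kk + int j) + (-1) * q) kk = Bi (kk + int j) kk] (mod int p)"
    using Bi_per[OF p q, of kk "kk + int j" "-1"] kk_bounds by linarith
  moreover have "Bi ((kk + int j) + (-1) * q) kk = 0"
    using j kk_bounds rr_bounds by (intro Bi_zero) (simp_all add: kk_def)
  ultimately show ?thesis by (simp add: cong_sym_eq)
qed

definition Phi' :: "int \<Rightarrow> int" where
  "Phi' N = (if 0 \<le> N div q \<and> N div q \<le> q - 2 then Bi (N mod q + N div q) (N div q) else 0)
            - (if N = 0 then 1 else 0)"

lemma D2c: "[Phi q N = Phi' N] (mod int p)"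
proof -
  define a where "a = N mod q"
  define b where "b = N div q"
  have a0: "0 \<le> a" "a < q" using qpos' by (simp_all add: a_def)
  have N: "N = a + b * q" by (simp add: a_def b_def)
  show ?thesis
  proof (cases "0 \<le> b \<and> b \<le> q - 2")
    case False
    have "N \<noteq> 0"
    proof
      assume "N = 0" hence "b = 0" by (simp add: b_def)
      thus False using False q3 by simp
    qed
    thus ?thesis using False unfolding Phi_def Phi'_def a_def[symmetric] b_def[symmetric] by auto
  next
    case True
    show ?thesis
    proof (cases "a + b = 0")
      case True
      hence "a = 0" "b = 0" using \<open>0 \<le> b \<and> b \<le> q - 2\<close> a0 by auto
      hence "N = 0" using N by simp
      thus ?thesis unfolding Phi_def Phi'_def a_def[symmetric] b_def[symmetric] using \<open>a = 0\<close> \<open>b = 0\<close> q3 by simp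
    next
      case False
      have Nn: "N \<noteq> 0"
      proof
        assume "N = 0" hence "a = 0" "b = 0" by (simp_all add: a_def b_def)
        thus False using False by simp
      qed
      show ?thesis
      proof (cases "a + b \<le> q - 1")
        case le: True
        have "ibinom (a + b) a = Bi (a + b) a" using a0 True by (simp add: ibinom_Bi)
        also have "\<dots> = Bi (a + b) b" using Bi_sym[of a "a + b"] a0 True by simp
        finally show ?thesis unfolding Phi_def Phi'_def a_def[symmetric] b_def[symmetric]
          using True le False a0 Nn by simp
      next
        case gt: False
        have "[Bi ((a + b) + (-1) * q) b = Bi (a + b) b] (mod int p)"
          using Bi_per[OF p q, of b "a + b" "-1"] True by linarith
        moreover have "Bi ((a + b) + (-1) * q) b = 0" using gt a0 True by (intro Bi_zero) simp_all
        ultimately have "[0 = Bi (a + b) b] (mod int p)" by simp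
        thus ?thesis unfolding Phi_def Phi'_def a_def[symmetric] b_def[symmetric]
          using True gt Nn by simp
      qed
    qed
  qed
qed

lemma D2: "[sumIII q n = (\<Sum>j=0..nat (q - 1). Bi (kk + int j) kk * Phi' (N0 - int j))] (mod int p)"
proof -
  have R: "nat rr \<le> nat (q - 1)" using rr_bounds by simp
  have "[sumIII q n = (\<Sum>j=0..nat rr. Bi (kk + int j) kk * Phi' (N0 - int j))] (mod int p)"
    unfolding D1
  proof (rule cong_sum)
    fix j assume "j \<in> {0..nat rr}"
    hence j: "j \<le> nat rr" by simp
    show "[ibinom rr (int j) * (-1)^j * Phi q (N0 - int j) = Bi (kk + int j) kk * Phi' (N0 - int j)] (mod int p)"
      by (rule cong_mult[OF D2a[OF j] D2c])
  qed
  also have "(\<Sum>j=0..nat rr. Bi (kk + int j) kk * Phi' (N0 - int j)) =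
             (\<Sum>j=0..nat (q - 1). if j \<le> nat rr then Bi (kk + int j) kk * Phi' (N0 - int j) else 0)"
  proof -
    have st: "{0..nat rr} = {j \<in> {0..nat (q - 1)}. j \<le> nat rr}" using R by auto
    show ?thesis unfolding st by (rule sum.inter_filter) simp
  qed
  also have "[(\<Sum>j=0..nat (q - 1). if j \<le> nat rr then Bi (kk + int j) kk * Phi' (N0 - int j) else 0) =
              (\<Sum>j=0..nat (q - 1). Bi (kk + int j) kk * Phi' (N0 - int j))] (mod int p)"
  proof (rule cong_sum)
    fix j assume "j \<in> {0..nat (q - 1)}"
    hence j: "j \<le> nat (q - 1)" by simp
    show "[(if j \<le> nat rr then Bi (kk + int j) kk * Phi' (N0 - int j) else 0) = Bi (kk + int j) kk * Phi' (N0 - int j)] (mod int p)"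
    proof (cases "j \<le> nat rr")
      case True thus ?thesis by simp
    next
      case False
      hence "[0 = Bi (kk + int j) kk] (mod int p)" using D2b[of j] j by (simp add: cong_sym_eq)
      hence "[0 * Phi' (N0 - int j) = Bi (kk + int j) kk * Phi' (N0 - int j)] (mod int p)"
        by (rule cong_scalar_right)
      thus ?thesis using False by simp
    qed
  qed
  finally show ?thesis .
qed

end

lemma vander_Bi:
  assumes "0 \<le> a" "0 \<le> b" "0 \<le> k"
  shows "(\<Sum>j=0..nat a. Bi (k + int j) k * Bi (a - int j + b) b) = Bi (a + b + k + 1) a"
proof -
  obtain A B K where AB: "a = int A" "b = int B" "k = int K" using assms by (metis nonneg_eq_int)
  have "(\<Sum>j=0..nat a. Bi (k + int j) k * Bi (a - int j + b) b) =
        (\<Sum>j=0..A. G (int (K + j)) K * G (int (A - j + B)) B)"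
  proof (rule sum.cong)
    show "{0..nat a} = {0..A}" using AB by simp
  next
    fix j assume "j \<in> {0..A}"
    hence j: "j \<le> A" by simp
    have e1: "Bi (k + int j) k = G (int (K + j)) K" using AB(3) unfolding Bi_def by simp
    have "a - int j + b = int (A - j + B)" using AB j by simp
    hence "Bi (a - int j + b) b = G (int (A - j + B)) B" using AB(2) unfolding Bi_def by simp
    with e1 show "Bi (k + int j) k * Bi (a - int j + b) b = G (int (K + j)) K * G (int (A - j + B)) B" by simp
  qed
  also have "\<dots> = G (int (A + B + K + 1)) A" by (rule vander_up_nat)
  also have "\<dots> = Bi (a + b + k + 1) a" using AB unfolding Bi_def by (simp add: add_ac)
  finally show ?thesis .
qed

context
  fixes p m :: nat and q :: int
  assumes p: "prime p" and q: "q = int p ^ m"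
begin

lemma seg2:
  assumes a: "0 \<le> a" "a < q" and b: "0 \<le> b" "b < q" and k: "0 \<le> k" "k < q"
  shows "[(\<Sum>j=Suc (nat a)..nat (q - 1). Bi (k + int j) k * Bi (a + q - int j + b) b)
          = Bi (a + q + b + k + 1) (a + q) - 2 * Bi (a + b + k + 1) a] (mod int p)"
proof -
  define A where "A = nat a"
  define QN where "QN = nat (q - 1)"
  let ?f = "\<lambda>j::nat. Bi (k + int j) k * Bi (a + q - int j + b) b"
  have qQ: "q = int QN + 1" using a unfolding QN_def by simp
  have aA: "a = int A" using a unfolding A_def by simp
  have AQ: "A \<le> QN" using a unfolding A_def QN_def by simp
  have full: "(\<Sum>j=0..nat (a + q). ?f j) = Bi (a + q + b + k + 1) (a + q)"
    using vander_Bi[of "a + q" b k] a b k by (simp add: algebra_simps)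
  have nq: "nat (a + q) = QN + (A + 1)" using qQ aA by simp
  have sp1: "(\<Sum>j=0..nat (a + q). ?f j) = (\<Sum>j=0..QN. ?f j) + (\<Sum>j=QN+1..QN + (A+1). ?f j)"
    unfolding nq by (rule sum.ub_add_nat) simp
  have sp2: "(\<Sum>j=0..QN. ?f j) = (\<Sum>j=0..A. ?f j) + (\<Sum>j=A+1..A + (QN - A). ?f j)"
    using AQ sum.ub_add_nat[of 0 A ?f "QN - A"] by simp
  have e2: "A + (QN - A) = QN" using AQ by simp
  have p3: "(\<Sum>j=QN+1..QN + (A+1). ?f j) = (\<Sum>i=0..A. ?f (i + (QN + 1)))"
    using sum.shift_bounds_cl_nat_ivl[of ?f 0 "QN + 1" A] by (simp add: add.commute)
  define V where "V = Bi (a + b + k + 1) a"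
  have P1: "[(\<Sum>j=0..A. ?f j) = V] (mod int p)"
  proof -
    have "[(\<Sum>j=0..A. ?f j) = (\<Sum>j=0..A. Bi (k + int j) k * Bi (a - int j + b) b)] (mod int p)"
    proof (rule cong_sum, rule cong_scalar_left)
      fix j assume "j \<in> {0..A}"
      have eq: "a + q - int j + b = (a - int j + b) + 1 * q" by simp
      show "[Bi (a + q - int j + b) b = Bi (a - int j + b) b] (mod int p)"
        unfolding eq by (rule Bi_per[OF p q]) (use b in auto)
    qed
    also have "(\<Sum>j=0..A. Bi (k + int j) k * Bi (a - int j + b) b) = V"
      unfolding V_def A_def by (rule vander_Bi[OF a(1) b(1) k(1)])
    finally show ?thesis .
  qed
  have P3: "[(\<Sum>i=0..A. ?f (i + (QN + 1))) = V] (mod int p)"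
  proof -
    have "[(\<Sum>i=0..A. ?f (i + (QN + 1))) = (\<Sum>j=0..A. Bi (k + int j) k * Bi (a - int j + b) b)] (mod int p)"
    proof (rule cong_sum, rule cong_mult)
      fix j assume "j \<in> {0..A}"
      have eq: "k + int (j + (QN + 1)) = (k + int j) + 1 * q" using qQ by simp
      show "[Bi (k + int (j + (QN + 1))) k = Bi (k + int j) k] (mod int p)"
        unfolding eq by (rule Bi_per[OF p q]) (use k in auto)
      have eq: "a + q - int (j + (QN + 1)) + b = a - int j + b" using qQ by simp
      show "[Bi (a + q - int (j + (QN + 1)) + b) b = Bi (a - int j + b) b] (mod int p)" unfolding eq by (rule cong_refl)
    qed
    also have "(\<Sum>j=0..A. Bi (k + int j) k * Bi (a - int j + b) b) = V"
      unfolding V_def A_def by (rule vander_Bi[OF a(1) b(1) k(1)])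
    finally show ?thesis .
  qed
  have tot: "(\<Sum>j=Suc A..QN. ?f j) = Bi (a + q + b + k + 1) (a + q) - (\<Sum>j=0..A. ?f j) - (\<Sum>i=0..A. ?f (i + (QN + 1)))"
    using full sp1 sp2 p3 e2 by simp
  have "[Bi (a + q + b + k + 1) (a + q) - (\<Sum>j=0..A. ?f j) - (\<Sum>i=0..A. ?f (i + (QN + 1)))
         = Bi (a + q + b + k + 1) (a + q) - V - V] (mod int p)"
    by (intro cong_diff P1 P3 cong_refl)
  thus ?thesis unfolding A_def[symmetric] QN_def[symmetric] tot V_def by (simp add: algebra_simps)
qed

end

context LS begin

definition "al0 = N0 mod q"
definition "be0 = N0 div q"

lemma al0_bounds: "0 \<le> al0" "al0 < q" using qpos' by (simp_all add: al0_def)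
lemma N0_eq: "N0 = al0 + be0 * q" by (simp add: al0_def be0_def)

definition "FF = (if 0 \<le> be0 \<and> be0 \<le> q - 2 then Bi (al0 + be0 + kk + 1) al0 else 0)
   + (if 1 \<le> be0 \<and> be0 \<le> q - 1 then Bi (al0 + q + be0 + kk) (al0 + q) - 2 * Bi (al0 + be0 + kk) al0 else 0)
   - (if be0 = 0 then Bi (kk + al0) kk else 0)"

lemma D3: "[(\<Sum>j=0..nat (q - 1). Bi (kk + int j) kk * Phi' (N0 - int j)) = FF] (mod int p)"
proof -
  define A where "A = nat al0"
  define QN where "QN = nat (q - 1)"
  have aA: "al0 = int A" using al0_bounds unfolding A_def by simp
  have qQ: "q = int QN + 1" using q3 unfolding QN_def by simp
  have AQ: "A \<le> QN" using al0_bounds aA qQ by simp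
  let ?c = "\<lambda>j::nat. Bi (kk + int j) kk"
  let ?W = "\<lambda>N. if 0 \<le> N div q \<and> N div q \<le> q - 2 then Bi (N mod q + N div q) (N div q) else 0"
  have split0: "(\<Sum>j=0..QN. ?c j * Phi' (N0 - int j)) =
        (\<Sum>j=0..QN. ?c j * ?W (N0 - int j)) - (\<Sum>j=0..QN. ?c j * (if N0 - int j = 0 then 1 else 0))"
    unfolding Phi'_def by (simp add: right_diff_distrib sum_subtractf)
  have delta: "(\<Sum>j=0..QN. ?c j * (if N0 - int j = 0 then 1 else 0)) = (if be0 = 0 then Bi (kk + al0) kk else 0)"
  proof -
    have "(\<Sum>j=0..QN. ?c j * (if N0 - int j = 0 then 1 else 0)) =
          (\<Sum>j=0..QN. if j = nat N0 then (if 0 \<le> N0 then ?c j else 0) else 0)"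
      by (rule sum.cong) auto
    also have "\<dots> = (if nat N0 \<in> {0..QN} then (if 0 \<le> N0 then ?c (nat N0) else 0) else 0)"
      by (rule sum.delta) simp
    also have "\<dots> = (if be0 = 0 then Bi (kk + al0) kk else 0)"
    proof (cases "be0 = 0")
      case True
      hence "N0 = al0" using N0_eq by simp
      thus ?thesis using True al0_bounds qQ by (simp add: add.commute)
    next
      case False
      have "\<not> (0 \<le> N0 \<and> nat N0 \<le> QN)"
      proof
        assume h: "0 \<le> N0 \<and> nat N0 \<le> QN"
        hence "0 \<le> N0" "N0 < q" using qQ by auto
        hence "be0 = 0" unfolding be0_def by simp
        thus False using False by simp
      qed
      thus ?thesis using False by auto
    qed
    finally show ?thesis .
  qed
  have split1: "(\<Sum>j=0..QN. ?c j * ?W (N0 - int j)) =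
       (\<Sum>j=0..A. ?c j * ?W (N0 - int j)) + (\<Sum>j=A+1..QN. ?c j * ?W (N0 - int j))"
    using sum.ub_add_nat[of 0 A "\<lambda>j. ?c j * ?W (N0 - int j)" "QN - A"] AQ by simp
  have seg1: "(\<Sum>j=0..A. ?c j * ?W (N0 - int j)) =
       (if 0 \<le> be0 \<and> be0 \<le> q - 2 then Bi (al0 + be0 + kk + 1) al0 else 0)"
  proof -
    have "(\<Sum>j=0..A. ?c j * ?W (N0 - int j)) =
          (\<Sum>j=0..A. if 0 \<le> be0 \<and> be0 \<le> q - 2 then ?c j * Bi (al0 - int j + be0) be0 else 0)"
    proof (rule sum.cong)
      fix j assume "j \<in> {0..A}"
      hence j: "j \<le> A" by simp
      have N: "N0 - int j = (al0 - int j) + be0 * q" using N0_eq by simp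
      have dm: "(N0 - int j) div q = be0" "(N0 - int j) mod q = al0 - int j"
        unfolding N using divmod_unique[of "al0 - int j" q be0] j aA al0_bounds by auto
      show "?c j * ?W (N0 - int j) = (if 0 \<le> be0 \<and> be0 \<le> q - 2 then ?c j * Bi (al0 - int j + be0) be0 else 0)"
        unfolding dm by simp
    qed simp
    also have "\<dots> = (if 0 \<le> be0 \<and> be0 \<le> q - 2 then (\<Sum>j=0..A. ?c j * Bi (al0 - int j + be0) be0) else 0)"
      by (cases "0 \<le> be0 \<and> be0 \<le> q - 2") auto
    also have "\<dots> = (if 0 \<le> be0 \<and> be0 \<le> q - 2 then Bi (al0 + be0 + kk + 1) al0 else 0)"
      using vander_Bi[of al0 be0 kk] al0_bounds kk_bounds unfolding A_def by auto
    finally show ?thesis .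
  qed
  have seg2: "[(\<Sum>j=A+1..QN. ?c j * ?W (N0 - int j)) =
       (if 1 \<le> be0 \<and> be0 \<le> q - 1 then Bi (al0 + q + be0 + kk) (al0 + q) - 2 * Bi (al0 + be0 + kk) al0 else 0)] (mod int p)"
  proof -
    have "(\<Sum>j=A+1..QN. ?c j * ?W (N0 - int j)) =
          (\<Sum>j=A+1..QN. if 1 \<le> be0 \<and> be0 \<le> q - 1 then ?c j * Bi (al0 + q - int j + (be0 - 1)) (be0 - 1) else 0)"
    proof (rule sum.cong)
      fix j assume "j \<in> {A+1..QN}"
      hence j: "A < j" "j \<le> QN" by auto
      have N: "N0 - int j = (al0 + q - int j) + (be0 - 1) * q" using N0_eq by (simp add: algebra_simps)
      have dm: "(N0 - int j) div q = be0 - 1" "(N0 - int j) mod q = al0 + q - int j"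
        unfolding N using divmod_unique[of "al0 + q - int j" q "be0 - 1"] j aA qQ by auto
      have c: "(0 \<le> be0 - 1 \<and> be0 - 1 \<le> q - 2) = (1 \<le> be0 \<and> be0 \<le> q - 1)" by auto
      show "?c j * ?W (N0 - int j) = (if 1 \<le> be0 \<and> be0 \<le> q - 1 then ?c j * Bi (al0 + q - int j + (be0 - 1)) (be0 - 1) else 0)"
        unfolding dm c by (simp add: algebra_simps)
    qed simp
    also have "\<dots> = (if 1 \<le> be0 \<and> be0 \<le> q - 1 then (\<Sum>j=Suc (nat al0)..nat (q - 1). ?c j * Bi (al0 + q - int j + (be0 - 1)) (be0 - 1)) else 0)"
      unfolding A_def QN_def by (cases "1 \<le> be0 \<and> be0 \<le> q - 1") auto
    finally have e: "(\<Sum>j=A+1..QN. ?c j * ?W (N0 - int j)) = \<dots>" .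
    show ?thesis
    proof (cases "1 \<le> be0 \<and> be0 \<le> q - 1")
      case True
      have "[(\<Sum>j=Suc (nat al0)..nat (q - 1). ?c j * Bi (al0 + q - int j + (be0 - 1)) (be0 - 1))
             = Bi (al0 + q + (be0 - 1) + kk + 1) (al0 + q) - 2 * Bi (al0 + (be0 - 1) + kk + 1) al0] (mod int p)"
        using seg2[OF p q, of al0 "be0 - 1" kk] al0_bounds kk_bounds True by simp
      thus ?thesis unfolding e using True by (simp add: algebra_simps)
    next
      case False
      show ?thesis unfolding e if_not_P[OF False] by (rule cong_refl)
    qed
  qed
  have "[(\<Sum>j=0..QN. ?c j * Phi' (N0 - int j)) =
        (if 0 \<le> be0 \<and> be0 \<le> q - 2 then Bi (al0 + be0 + kk + 1) al0 else 0)
      + (if 1 \<le> be0 \<and> be0 \<le> q - 1 then Bi (al0 + q + be0 + kk) (al0 + q) - 2 * Bi (al0 + be0 + kk) al0 else 0)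
      - (if be0 = 0 then Bi (kk + al0) kk else 0)] (mod int p)"
    unfolding split0 split1 delta seg1 by (intro cong_add cong_diff seg2 cong_refl)
  thus ?thesis unfolding FF_def QN_def .
qed

end

lemma int_bracket1:
  fixes e c :: int and f :: real
  assumes "0 \<le> f" "f < 1"
  shows "(real_of_int c - f \<le> real_of_int e \<and> real_of_int e < real_of_int c - f + 1) \<longleftrightarrow> e = c"
proof
  assume h: "real_of_int c - f \<le> real_of_int e \<and> real_of_int e < real_of_int c - f + 1"
  hence "real_of_int (c - 1) < real_of_int e" using assms by simp
  hence a: "c - 1 < e" by (simp only: of_int_less_iff)
  have "real_of_int e < real_of_int (c + 1)" using h assms by simp
  hence b: "e < c + 1" by (simp only: of_int_less_iff)
  show "e = c" using a b by simp
qed (use assms in simp)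

lemma int_bracket2:
  fixes s c :: int and f :: real
  assumes "0 \<le> f" "f < 1"
  shows "(real_of_int c + f < real_of_int s \<and> real_of_int s \<le> real_of_int c + f + 1) \<longleftrightarrow> s = c + 1"
proof
  assume h: "real_of_int c + f < real_of_int s \<and> real_of_int s \<le> real_of_int c + f + 1"
  hence "real_of_int c < real_of_int s" using assms by simp
  hence a: "c < s" by (simp only: of_int_less_iff)
  have "real_of_int s < real_of_int (c + 2)" using h assms by simp
  hence b: "s < c + 2" by (simp only: of_int_less_iff)
  show "s = c + 1" using a b by simp
qed (use assms in simp)

context LS begin

definition "hterm e = (if even (v + e) then 1 else -1) * ibinom (rr + v - e) (q - 1 - rr - u - e * q)"
definition "Sec = (if -2 < v - q + tt + 1 \<and> v - q + tt + 1 \<le> 1 then ibinom rr ((q + 1 - v - tt) * (q - 1) - 2 * rr) else 0)"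
definition "RHS1 = (\<Sum>s\<in>{-1,0,1}. if v - q + 1 \<le> s - tt \<and> s - tt < v then hterm (s - tt) else 0)"

lemma x_eq: "real_of_int (u + v) / real_of_int (q - 1) = real_of_int tt + real_of_int rr / real_of_int (q - 1)"
proof -
  have q1: "real_of_int (q - 1) > 0" using q3 by simp
  have "real_of_int (u + v) = real_of_int tt * real_of_int (q - 1) + real_of_int rr"
    using uv_tt by (metis of_int_add of_int_mult)
  thus ?thesis using q1 by (simp add: field_simps)
qed

lemma f_bounds: "0 \<le> real_of_int rr / real_of_int (q - 1)" "real_of_int rr / real_of_int (q - 1) < 1"
proof -
  have q1: "real_of_int (q - 1) > 0" using q3 by simp
  show "0 \<le> real_of_int rr / real_of_int (q - 1)" using rr_bounds q1 by simp
  have "real_of_int rr < real_of_int (q - 1)" using rr_bounds by (simp only: of_int_less_iff)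
  thus "real_of_int rr / real_of_int (q - 1) < 1" using q1 by simp
qed

lemma R: "rhsIII q u v = RHS1 - Sec"
proof -
  define f where "f = real_of_int rr / real_of_int (q - 1)"
  have f: "0 \<le> f" "f < 1" using f_bounds unfolding f_def by auto
  have x: "real_of_int (u + v) / real_of_int (q - 1) = real_of_int tt + f" using x_eq unfolding f_def .
  let ?P1 = "\<lambda>(s::int, e::int). -1 \<le> s \<and> s \<le> 1 \<and>
          max (real_of_int s - real_of_int (u + v) / real_of_int (q - 1)) (real_of_int (v - q + 1))
            \<le> real_of_int e \<and>
          real_of_int e <
          min (real_of_int s - real_of_int (u + v) / real_of_int (q - 1) + 1) (real_of_int v)"
  let ?S1 = "{s::int. -1 \<le> s \<and> s \<le> 1 \<and> v - q + 1 \<le> s - tt \<and> s - tt < v}"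
  have set1: "{(s, e). ?P1 (s, e)} = (\<lambda>s. (s, s - tt)) ` ?S1"
  proof -
    have "?P1 (s, e) \<longleftrightarrow> (-1 \<le> s \<and> s \<le> 1 \<and> v - q + 1 \<le> s - tt \<and> s - tt < v \<and> e = s - tt)" for s e
    proof -
      have "(real_of_int (s - tt) - f \<le> real_of_int e \<and> real_of_int e < real_of_int (s - tt) - f + 1) \<longleftrightarrow> e = s - tt"
        by (rule int_bracket1[OF f])
      moreover have "real_of_int s - real_of_int (u + v) / real_of_int (q - 1) = real_of_int (s - tt) - f"
        unfolding x by simp
      ultimately show ?thesis by (auto simp: of_int_le_iff of_int_less_iff simp del: of_int_diff)
    qed
    thus ?thesis by auto
  qed
  let ?g1 = "\<lambda>(s, e). (if even (v + e) then 1 else -1) *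
        ibinom (u + 2 * v - (s - e) * (q - 1) - e)
               ((s - 2 * e + 1) * (q - 1) - 2 * u - v - e)"
  have sum1: "(\<Sum>(s, \<epsilon>) \<in> {(s, \<epsilon>). -1 \<le> s \<and> s \<le> 1 \<and>
          max (real_of_int s - real_of_int (u + v) / real_of_int (q - 1)) (real_of_int (v - q + 1))
            \<le> real_of_int \<epsilon> \<and>
          real_of_int \<epsilon> <
          min (real_of_int s - real_of_int (u + v) / real_of_int (q - 1) + 1) (real_of_int v)}.
        (if even (v + \<epsilon>) then 1 else -1) *
        ibinom (u + 2 * v - (s - \<epsilon>) * (q - 1) - \<epsilon>)
               ((s - 2 * \<epsilon> + 1) * (q - 1) - 2 * u - v - \<epsilon>)) = RHS1"
  proof -
    have "(\<Sum>(s, \<epsilon>) \<in> {(s, \<epsilon>). -1 \<le> s \<and> s \<le> 1 \<and>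
          max (real_of_int s - real_of_int (u + v) / real_of_int (q - 1)) (real_of_int (v - q + 1))
            \<le> real_of_int \<epsilon> \<and>
          real_of_int \<epsilon> <
          min (real_of_int s - real_of_int (u + v) / real_of_int (q - 1) + 1) (real_of_int v)}.
        (if even (v + \<epsilon>) then 1 else -1) *
        ibinom (u + 2 * v - (s - \<epsilon>) * (q - 1) - \<epsilon>)
               ((s - 2 * \<epsilon> + 1) * (q - 1) - 2 * u - v - \<epsilon>)) = (\<Sum>(s, e) \<in> {(s, e). ?P1 (s, e)}. ?g1 (s, e))" by simp
    also
    have "(\<Sum>(s, e) \<in> {(s, e). ?P1 (s, e)}. ?g1 (s, e)) = (\<Sum>s\<in>?S1. ?g1 (s, s - tt))"
      unfolding set1 by (subst sum.reindex) (auto simp: inj_on_def)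
    also have "\<dots> = (\<Sum>s\<in>?S1. hterm (s - tt))"
    proof (rule sum.cong)
      fix s assume "s \<in> ?S1"
      have a1: "u + 2 * v - (s - (s - tt)) * (q - 1) - (s - tt) = rr + v - (s - tt)"
        using uv_tt by (simp add: algebra_simps)
      have a2: "(s - 2 * (s - tt) + 1) * (q - 1) - 2 * u - v - (s - tt) = q - 1 - rr - u - (s - tt) * q"
        using uv_tt by (simp add: algebra_simps)
      show "?g1 (s, s - tt) = hterm (s - tt)" unfolding hterm_def by (simp only: prod.case a1 a2)
    qed simp
    also have "?S1 = {s \<in> {-1,0,1}. v - q + 1 \<le> s - tt \<and> s - tt < v}" by auto
    also have "(\<Sum>s\<in>{s \<in> {-1,0,1}. v - q + 1 \<le> s - tt \<and> s - tt < v}. hterm (s - tt)) = RHS1"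
      unfolding RHS1_def by (rule sum.inter_filter) simp
    finally show ?thesis .
  qed
  let ?P2 = "\<lambda>s. max (-2) (real_of_int (v - q) + real_of_int (u + v) / real_of_int (q - 1))
                   < real_of_int s \<and>
                 real_of_int s \<le>
                   min 1 (real_of_int (v - q) + real_of_int (u + v) / real_of_int (q - 1) + 1)"
  let ?g2 = "\<lambda>s. ibinom (u + v - (s - v + q - 1) * (q - 1))
               ((s - 2 * v + 2 * q) * (q - 1) - 2 * (u + v))"
  define s0 where "s0 = v - q + tt + 1"
  have set2: "{s. ?P2 s} = {s. s = s0 \<and> -2 < s0 \<and> s0 \<le> 1}"
  proof -
    have "?P2 s \<longleftrightarrow> (s = s0 \<and> -2 < s0 \<and> s0 \<le> 1)" for s
    proof -
      have "(real_of_int (v - q + tt) + f < real_of_int s \<and> real_of_int s \<le> real_of_int (v - q + tt) + f + 1) \<longleftrightarrow> s = v - q + tt + 1"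
        by (rule int_bracket2[OF f])
      moreover have "real_of_int (v - q) + real_of_int (u + v) / real_of_int (q - 1) = real_of_int (v - q + tt) + f"
        unfolding x by simp
      ultimately show ?thesis unfolding s0_def by (auto simp: of_int_le_iff of_int_less_iff simp del: of_int_diff of_int_add)
    qed
    thus ?thesis by auto
  qed
  have sum2': "(\<Sum>s \<in> {s. ?P2 s}. ?g2 s) = Sec"
  proof (cases "-2 < s0 \<and> s0 \<le> 1")
    case True
    hence "{s. ?P2 s} = {s0}" unfolding set2 by auto
    moreover have "?g2 s0 = ibinom rr ((q + 1 - v - tt) * (q - 1) - 2 * rr)"
    proof -
      have "u + v - (s0 - v + q - 1) * (q - 1) = rr" using uv_tt unfolding s0_def by (simp add: algebra_simps)
      moreover have "(s0 - 2 * v + 2 * q) * (q - 1) - 2 * (u + v) = (q + 1 - v - tt) * (q - 1) - 2 * rr"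
        using uv_tt unfolding s0_def by (simp add: algebra_simps)
      ultimately show ?thesis by simp
    qed
    ultimately show ?thesis using True unfolding Sec_def s0_def by simp
  next
    case False
    hence e: "{s. ?P2 s} = {}" unfolding set2 by auto
    have nc: "\<not> (-2 < v - q + tt + 1 \<and> v - q + tt + 1 \<le> 1)" using False unfolding s0_def .
    show ?thesis unfolding e Sec_def if_not_P[OF nc] by simp
  qed
  have sum2: "(\<Sum>s \<in> {s. max (-2) (real_of_int (v - q) + real_of_int (u + v) / real_of_int (q - 1))
                   < real_of_int s \<and>
                 real_of_int s \<le>
                   min 1 (real_of_int (v - q) + real_of_int (u + v) / real_of_int (q - 1) + 1)}.
        ibinom (u + v - (s - v + q - 1) * (q - 1))
               ((s - 2 * v + 2 * q) * (q - 1) - 2 * (u + v))) = Sec" using sum2' by (simp only:)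
  show ?thesis unfolding rhsIII_def sum1 sum2 ..
qed

end

context LS begin

definition "e0 = (if u \<le> kk then 0 else -1 :: int)"
definition "MM = al0 + be0 + kk"
definition "Xv = Bi (MM + 1) al0"
definition "Yv = Bi MM al0"
definition "Tv = Bi (MM - q) (al0 + q)"

lemma kk_rr: "kk = q - 1 - rr" by (simp add: kk_def)

lemma ab: "al0 = kk - u - e0 * q" "be0 = q - 1 - v + e0"
proof -
  have N: "N0 = (kk - u - e0 * q) + (q - 1 - v + e0) * q"
    unfolding N0_def using nuv by (simp add: algebra_simps)
  have b: "0 \<le> kk - u - e0 * q" "kk - u - e0 * q < q"
    using kk_bounds u0 uq unfolding e0_def by auto
  show "al0 = kk - u - e0 * q" unfolding al0_def N using divmod_unique[OF b] by simp
  show "be0 = q - 1 - v + e0" unfolding be0_def N using divmod_unique[OF b] by simp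
qed

lemma tt_cases: "tt = 0 \<or> tt = 1 \<or> tt = 2" using tt_bounds by auto

lemma par0: "even (al0 + (v + e0))"
proof -
  have "al0 + (v + e0) = (q - 1) * (1 + tt - e0) - 2 * u"
    using ab(1) uv_tt kk_rr by (simp add: algebra_simps)
  moreover have "even (q - 1)" using qodd by simp
  ultimately show ?thesis by simp
qed

lemma sign_lemma:
  assumes "0 \<le> a" "even (a + b)"
  shows "(if even b then 1 else -1) * (-1::int)^nat a = 1"
proof -
  have "even (nat a) \<longleftrightarrow> even a" using assms(1) by (simp add: even_nat_iff)
  moreover have "even a \<longleftrightarrow> even b" using assms(2) by simp
  ultimately show ?thesis by (cases "even b") (simp_all add: minus_one_power_iff)
qed

lemma H0: "[hterm e0 = Xv] (mod int p)"
proof -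
  have low: "q - 1 - rr - u - e0 * q = al0" using ab(1) kk_rr by simp
  have up: "0 \<le> rr + v - e0" using rr_bounds v0 unfolding e0_def by auto
  have "hterm e0 = (if even (v + e0) then 1 else -1) * Bi (rr + v - e0) al0"
    unfolding hterm_def low using up by (simp add: ibinom_Bi)
  also have "Bi (rr + v - e0) al0 = (-1)^nat al0 * Bi (al0 - (rr + v - e0) - 1) al0"
    by (rule Bi_neg) (use al0_bounds in simp)
  also have "al0 - (rr + v - e0) - 1 = (MM + 1) + (-2) * q"
    unfolding MM_def using ab(2) kk_rr by (simp add: algebra_simps)
  finally have e: "hterm e0 = ((if even (v + e0) then 1 else -1) * (-1)^nat al0) * Bi ((MM + 1) + (-2) * q) al0"
    by (simp add: mult_ac)
  have s: "(if even (v + e0) then 1 else -1) * (-1::int)^nat al0 = 1"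
    by (rule sign_lemma) (use al0_bounds par0 in \<open>simp_all add: add_ac\<close>)
  have "[Bi ((MM + 1) + (-2) * q) al0 = Bi (MM + 1) al0] (mod int p)"
    by (rule Bi_per[OF p q]) (use al0_bounds in auto)
  thus ?thesis unfolding e s Xv_def by simp
qed

lemma H1: "hterm (e0 - 1) = Tv"
proof -
  have low: "q - 1 - rr - u - (e0 - 1) * q = al0 + q" using ab(1) kk_rr by (simp add: algebra_simps)
  have up: "0 \<le> rr + v - (e0 - 1)" using rr_bounds v0 unfolding e0_def by auto
  have "hterm (e0 - 1) = (if even (v + (e0 - 1)) then 1 else -1) * Bi (rr + v - (e0 - 1)) (al0 + q)"
    unfolding hterm_def low using up by (simp add: ibinom_Bi)
  also have "Bi (rr + v - (e0 - 1)) (al0 + q) = (-1)^nat (al0 + q) * Bi ((al0 + q) - (rr + v - (e0 - 1)) - 1) (al0 + q)"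
    by (rule Bi_neg) (use al0_bounds q3 in simp)
  also have "(al0 + q) - (rr + v - (e0 - 1)) - 1 = MM - q"
    unfolding MM_def using ab(2) kk_rr by (simp add: algebra_simps)
  finally have e: "hterm (e0 - 1) = ((if even (v + (e0 - 1)) then 1 else -1) * (-1)^nat (al0 + q)) * Bi (MM - q) (al0 + q)"
    by (simp add: mult_ac)
  have pp: "even ((al0 + q) + (v + (e0 - 1)))"
  proof -
    have "(al0 + q) + (v + (e0 - 1)) = (al0 + (v + e0)) + (q - 1)" by simp
    moreover have "even (q - 1)" using qodd by simp
    ultimately show ?thesis using par0 by simp
  qed
  have s: "(if even (v + (e0 - 1)) then 1 else -1) * (-1::int)^nat (al0 + q) = 1"
    by (rule sign_lemma) (use al0_bounds q3 pp in simp_all)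
  show ?thesis unfolding e s Tv_def by simp
qed

lemma cong_int_lin:
  fixes P :: int
  assumes "[a = b] (mod P)" "[c = d] (mod P)" "[e = f] (mod P)"
  shows "[a + c + e = b + d + f] (mod P)"
  using assms by (intro cong_add)

lemma HT: "[Bi (MM + q) (al0 + q) - 2 * Bi MM al0 = Tv] (mod int p)"
proof -
  have c1: "[Bi (MM + q) (al0 + q) = Bi MM (al0 + q) + Bi MM al0] (mod int p)"
    using Bi_shift[OF p q, of MM "al0 + q"] by simp
  have c2: "[Bi ((MM - q) + q) (al0 + q) = Bi (MM - q) (al0 + q) + Bi (MM - q) al0] (mod int p)"
    using Bi_shift[OF p q, of "MM - q" "al0 + q"] by simp
  have c3: "[Bi (MM + (-1) * q) al0 = Bi MM al0] (mod int p)"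
    by (rule Bi_per[OF p q]) (use al0_bounds in auto)
  have d1: "int p dvd (Bi (MM + q) (al0 + q) - (Bi MM (al0 + q) + Bi MM al0))" using c1 by (simp add: cong_iff_dvd_diff)
  have d2: "int p dvd (Bi MM (al0 + q) - (Bi (MM - q) (al0 + q) + Bi (MM - q) al0))" using c2 by (simp add: cong_iff_dvd_diff)
  have d3: "int p dvd (Bi (MM - q) al0 - Bi MM al0)" using c3 by (simp add: cong_iff_dvd_diff)
  have "int p dvd ((Bi (MM + q) (al0 + q) - (Bi MM (al0 + q) + Bi MM al0))
          + (Bi MM (al0 + q) - (Bi (MM - q) (al0 + q) + Bi (MM - q) al0))
          + (Bi (MM - q) al0 - Bi MM al0))"
    using d1 d2 d3 by (intro dvd_add)
  thus ?thesis unfolding Tv_def by (simp add: cong_iff_dvd_diff algebra_simps)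
qed

lemma FFc: "[FF = (if 0 \<le> be0 \<and> be0 \<le> q - 2 then Xv else 0) + (if 1 \<le> be0 \<and> be0 \<le> q - 1 then Tv else 0)
           - (if be0 = 0 then Yv else 0)] (mod int p)"
proof -
  have y: "Bi (kk + al0) kk = Yv" if "be0 = 0"
  proof -
    have "Bi (kk + al0) kk = Bi (kk + al0) (kk + al0 - kk)" by (rule Bi_sym) (use kk_bounds al0_bounds in auto)
    thus ?thesis unfolding Yv_def MM_def using that by (simp add: add.commute)
  qed
  have "[(if 1 \<le> be0 \<and> be0 \<le> q - 1 then Bi (al0 + q + be0 + kk) (al0 + q) - 2 * Bi (al0 + be0 + kk) al0 else 0)
        = (if 1 \<le> be0 \<and> be0 \<le> q - 1 then Tv else 0)] (mod int p)"
    using HT unfolding MM_def by (simp add: add_ac)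
  moreover have "(if be0 = 0 then Bi (kk + al0) kk else 0) = (if be0 = 0 then Yv else 0)" using y by simp
  moreover have "Bi (al0 + be0 + kk + 1) al0 = Xv" unfolding Xv_def MM_def ..
  ultimately show ?thesis unfolding FF_def by (intro cong_add cong_diff cong_refl) simp_all
qed

end

context LS begin

lemma ibinom_zero: "y < 0 \<or> x < y \<Longrightarrow> ibinom x y = 0"
  by (auto simp: ibinom_def)

lemma e0_cases: "(u \<le> kk \<and> e0 = 0) \<or> (kk < u \<and> e0 = -1)"
  unfolding e0_def by auto

lemma uv_cases: "(tt = 0 \<and> u + v = rr) \<or> (tt = 1 \<and> u + v = q - 1 + rr) \<or> (tt = 2 \<and> u + v = 2 * q - 2 + rr)"
  using tt_cases uv_tt by auto

lemma HZ:
  assumes s: "-1 \<le> s" "s \<le> 1" and n0: "s - tt \<noteq> e0" and n1: "s - tt \<noteq> e0 - 1"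
    and c: "v - q + 1 \<le> s - tt" "s - tt < v"
  shows "hterm (s - tt) = 0"
proof -
  define e where "e = s - tt"
  have low: "q - 1 - rr - u - e * q = al0 - (e - e0) * q" using ab(1) kk_rr by (simp add: algebra_simps)
  have "e0 + 1 \<le> e \<or> e \<le> e0 - 2" using n0 n1 unfolding e_def by linarith
  thus ?thesis
  proof
    assume h: "e0 + 1 \<le> e"
    have "1 * q \<le> (e - e0) * q" using h q3 by (intro mult_right_mono) auto
    hence "al0 - (e - e0) * q < 0" using al0_bounds by linarith
    hence "q - 1 - rr - u - e * q < 0" unfolding low .
    hence "ibinom (rr + v - e) (q - 1 - rr - u - e * q) = 0" by (intro ibinom_zero) simp
    thus ?thesis unfolding hterm_def e_def[symmetric] by simp
  next
    assume h: "e \<le> e0 - 2"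
    have m: "2 * (q - 1) \<le> (e0 - e) * (q - 1)" using h q3 by (intro mult_right_mono) auto
    have df: "(q - 1 - rr - u - e * q) - (rr + v - e) = (al0 - rr - v + e0) + (e0 - e) * (q - 1)"
      unfolding low by (simp add: algebra_simps)
    have "0 < (al0 - rr - v + e0) + 2 * (q - 1)"
    proof -
      have ve: "v \<le> e0 - 2 + q - 1" using c h unfolding e_def[symmetric] by linarith
      have a: "al0 = q - 1 - rr - u - e0 * q" using ab(1) kk_rr by simp
      show ?thesis using e0_cases uv_cases rr_bounds u0 v0 uq vq ve q3 kk_rr unfolding a by auto
    qed
    hence "rr + v - e < q - 1 - rr - u - e * q" using df m by linarith
    hence "ibinom (rr + v - e) (q - 1 - rr - u - e * q) = 0" by (intro ibinom_zero) simp
    thus ?thesis unfolding hterm_def e_def[symmetric] by simp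
  qed
qed

end

context LS begin

definition "c0 \<longleftrightarrow> (-1 \<le> tt + e0 \<and> tt + e0 \<le> 1 \<and> v - q + 1 \<le> e0 \<and> e0 < v)"
definition "c1 \<longleftrightarrow> (-1 \<le> tt + e0 - 1 \<and> tt + e0 - 1 \<le> 1 \<and> v - q + 1 \<le> e0 - 1 \<and> e0 - 1 < v)"

lemma mem3: "(a::int) \<in> {-1, 0, 1} \<longleftrightarrow> -1 \<le> a \<and> a \<le> 1" by auto

lemma RHS1_eq: "RHS1 = (if c0 then hterm e0 else 0) + (if c1 then hterm (e0 - 1) else 0)"
proof -
  let ?A = "\<lambda>s. if s = tt + e0 then (if v - q + 1 \<le> e0 \<and> e0 < v then hterm e0 else 0) else 0"
  let ?B = "\<lambda>s. if s = tt + e0 - 1 then (if v - q + 1 \<le> e0 - 1 \<and> e0 - 1 < v then hterm (e0 - 1) else 0) else 0"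
  have "RHS1 = (\<Sum>s\<in>{-1,0,1}. ?A s + ?B s)"
    unfolding RHS1_def
  proof (rule sum.cong)
    fix s :: int assume "s \<in> {-1, 0, 1}"
    hence s: "-1 \<le> s" "s \<le> 1" by auto
    show "(if v - q + 1 \<le> s - tt \<and> s - tt < v then hterm (s - tt) else 0) = ?A s + ?B s"
    proof (cases "s - tt = e0")
      case True
      hence "s = tt + e0" "s \<noteq> tt + e0 - 1" by auto
      thus ?thesis using True by simp
    next
      case F0: False
      show ?thesis
      proof (cases "s - tt = e0 - 1")
        case True
        hence "s \<noteq> tt + e0" "s = tt + e0 - 1" by auto
        thus ?thesis using True by simp
      next
        case F1: False
        hence "s \<noteq> tt + e0" "s \<noteq> tt + e0 - 1" using F0 by auto
        moreover have "(if v - q + 1 \<le> s - tt \<and> s - tt < v then hterm (s - tt) else 0) = 0"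
          using HZ[OF s F0 F1] by auto
        ultimately show ?thesis by simp
      qed
    qed
  qed simp
  also have "\<dots> = (\<Sum>s\<in>{-1,0,1}. ?A s) + (\<Sum>s\<in>{-1,0,1}. ?B s)" by (rule sum.distrib)
  also have "(\<Sum>s\<in>{-1,0,1}. ?A s) = (if c0 then hterm e0 else 0)"
    by (subst sum.delta) (auto simp: c0_def mem3)
  also have "(\<Sum>s\<in>{-1,0,1}. ?B s) = (if c1 then hterm (e0 - 1) else 0)"
    by (subst sum.delta) (auto simp: c1_def mem3)
  finally show ?thesis .
qed

lemma K1: "\<not> (u \<le> kk \<and> tt = 2) \<Longrightarrow> (0 \<le> be0 \<and> be0 \<le> q - 2) = c0"
  using ab(2) e0_cases uv_cases rr_bounds u0 v0 uq vq q3 kk_rr unfolding c0_def by auto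

lemma K2: "\<not> (kk < u \<and> tt = 0) \<Longrightarrow> (1 \<le> be0 \<and> be0 \<le> q - 1) = c1"
  using ab(2) e0_cases uv_cases rr_bounds u0 v0 uq vq q3 kk_rr unfolding c1_def by auto

lemma K3: "kk < u \<Longrightarrow> tt = 0 \<Longrightarrow> Tv = 0"
proof -
  assume h: "kk < u" "tt = 0"
  have e: "e0 = -1" using h e0_cases by auto
  have "0 \<le> MM - q" "MM - q < al0 + q"
    unfolding MM_def using ab e h uv_cases rr_bounds u0 v0 uq vq q3 kk_rr by auto
  thus ?thesis unfolding Tv_def by (intro Bi_zero) auto
qed

lemma K4: "u \<le> kk \<Longrightarrow> tt = 2 \<Longrightarrow> be0 = 0 \<and> Xv = Yv \<and> Sec = 0 \<and> \<not> c0"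
proof -
  assume h: "u \<le> kk" "tt = 2"
  have e: "e0 = 0" using h e0_cases by auto
  have uv: "u = q - 1" "v = q - 1" "rr = 0" using h uv_cases rr_bounds u0 v0 uq vq by auto
  have al: "al0 = 0" using ab(1) e uv kk_rr by simp
  have be: "be0 = 0" using ab(2) e uv by simp
  have "Xv = Yv" unfolding Xv_def Yv_def al by simp
  moreover have "Sec = 0" unfolding Sec_def using uv h by simp
  moreover have "\<not> c0" unfolding c0_def using h e by simp
  ultimately show ?thesis using be by simp
qed

lemma K5: "be0 = 0 \<Longrightarrow> \<not> (u \<le> kk \<and> tt = 2) \<Longrightarrow> [Yv = Sec] (mod int p)"
proof -
  assume h: "be0 = 0" "\<not> (u \<le> kk \<and> tt = 2)"
  have v: "v = q - 1 + e0" using ab(2) h by simp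
  have t1: "tt = 1" using h(2) v e0_cases uv_cases rr_bounds u0 v0 uq vq q3 kk_rr by presburger
  have uu: "u = rr - e0" using v t1 uv_tt by simp
  have al: "al0 = (q - 1) * (1 - e0) - 2 * rr"
  proof -
    have "al0 = q - 1 - rr - (rr - e0) - e0 * q" using ab(1) kk_rr uu by simp
    thus ?thesis by (simp add: algebra_simps)
  qed
  have ev: "even al0"
  proof -
    have "even (q - 1)" using qodd by simp
    thus ?thesis unfolding al by simp
  qed
  have sc: "-2 < v - q + tt + 1 \<and> v - q + tt + 1 \<le> 1" using v t1 e0_cases by linarith
  have w: "q + 1 - v - tt = 1 - e0" using v t1 by linarith
  have L: "(q + 1 - v - tt) * (q - 1) - 2 * rr = al0"
    unfolding w al by (simp add: algebra_simps)
  have Sec: "Sec = Bi rr al0" unfolding Sec_def if_P[OF sc] L using rr_bounds by (simp add: ibinom_Bi)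
  have MM: "MM = al0 + kk" unfolding MM_def using h by simp
  have "Yv = (-1)^nat al0 * Bi (al0 - MM - 1) al0" unfolding Yv_def by (rule Bi_neg) (use al0_bounds in simp)
  also have "(-1::int)^nat al0 = 1" using ev al0_bounds by (simp add: even_nat_iff)
  also have "al0 - MM - 1 = rr + (-1) * q" unfolding MM kk_rr by simp
  finally have y: "Yv = Bi (rr + (-1) * q) al0" by simp
  have "[Bi (rr + (-1) * q) al0 = Bi rr al0] (mod int p)"
    by (rule Bi_per[OF p q]) (use al0_bounds in auto)
  thus ?thesis unfolding y Sec .
qed

lemma K6: "be0 \<noteq> 0 \<Longrightarrow> Sec = 0"
proof -
  assume h: "be0 \<noteq> 0"
  show ?thesis
  proof (cases "-2 < v - q + tt + 1 \<and> v - q + tt + 1 \<le> 1")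
    case False
    show ?thesis unfolding Sec_def if_not_P[OF False] ..
  next
    case True
    define w where "w = q + 1 - v - tt"
    have w: "w = 1 \<or> w = 2 \<or> w = 3" using True unfolding w_def by auto
    have wd: "v + tt = q + 1 - w" unfolding w_def by simp
    have "w * (q - 1) - 2 * rr < 0 \<or> rr < w * (q - 1) - 2 * rr"
    proof -
      consider "w = 1" | "w = 2" | "w = 3" using w by blast
      thus ?thesis
      proof cases
        case 1
        hence L: "w * (q - 1) - 2 * rr = q - 1 - 2 * rr" by simp
        show ?thesis unfolding L using 1 wd h ab(2) e0_cases uv_cases rr_bounds u0 v0 uq vq q3 kk_rr by auto
      next
        case 2
        hence L: "w * (q - 1) - 2 * rr = 2 * q - 2 - 2 * rr" by simp
        show ?thesis unfolding L using 2 wd h ab(2) e0_cases uv_cases rr_bounds u0 v0 uq vq q3 kk_rr by auto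
      next
        case 3
        hence L: "w * (q - 1) - 2 * rr = 3 * q - 3 - 2 * rr" by simp
        show ?thesis unfolding L using 3 rr_bounds by auto
      qed
    qed
    hence "ibinom rr ((q + 1 - v - tt) * (q - 1) - 2 * rr) = 0" unfolding w_def by (intro ibinom_zero)
    thus ?thesis unfolding Sec_def by simp
  qed
qed

end

context LS begin

lemma main: "[sumIII q n = rhsIII q u v] (mod int p)"
proof -
  define LL where "LL = (if 0 \<le> be0 \<and> be0 \<le> q - 2 then Xv else 0) + (if 1 \<le> be0 \<and> be0 \<le> q - 1 then Tv else 0)
           - (if be0 = 0 then Yv else 0)"
  define RR where "RR = (if c0 then Xv else 0) + (if c1 then Tv else 0) - Sec"
  have L: "[sumIII q n = LL] (mod int p)"
    using cong_trans[OF cong_trans[OF D2 D3] FFc] unfolding LL_def .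
  have R: "[rhsIII q u v = RR] (mod int p)"
  proof -
    have "rhsIII q u v = (if c0 then hterm e0 else 0) + (if c1 then hterm (e0 - 1) else 0) - Sec"
      using R RHS1_eq by simp
    moreover have "[(if c0 then hterm e0 else 0) = (if c0 then Xv else 0)] (mod int p)"
      using H0 by simp
    ultimately show ?thesis unfolding RR_def H1 by (simp add: cong_add cong_diff)
  qed
  have M: "[LL = RR] (mod int p)"
  proof (cases "u \<le> kk \<and> tt = 2")
    case True
    have k4: "be0 = 0" "Xv = Yv" "Sec = 0" "\<not> c0" using K4 True by auto
    have "\<not> (kk < u \<and> tt = 0)" using True by auto
    hence "(1 \<le> be0 \<and> be0 \<le> q - 1) = c1" by (rule K2)
    hence nc1: "\<not> c1" using k4 by simp
    have "LL = 0" unfolding LL_def using k4 q3 by simp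
    moreover have "RR = 0" unfolding RR_def using k4 nc1 by simp
    ultimately show ?thesis by simp
  next
    case False
    have a: "(if 0 \<le> be0 \<and> be0 \<le> q - 2 then Xv else 0) = (if c0 then Xv else 0)" using K1[OF False] by simp
    have b: "(if 1 \<le> be0 \<and> be0 \<le> q - 1 then Tv else 0) = (if c1 then Tv else 0)"
    proof (cases "kk < u \<and> tt = 0")
      case True
      thus ?thesis using K3 by simp
    next
      case F2: False
      show ?thesis using K2[OF F2] by simp
    qed
    have c: "[(if be0 = 0 then Yv else 0) = Sec] (mod int p)"
    proof (cases "be0 = 0")
      case True
      thus ?thesis using K5[OF True False] by simp
    next
      case F3: False
      thus ?thesis using K6[OF F3] by simp
    qed
    show ?thesis unfolding LL_def RR_def a b by (intro cong_diff cong_refl c)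
  qed
  show ?thesis using cong_trans[OF cong_trans[OF L M] cong_sym[OF R]] .
qed

end

theorem lemma4p3:
  fixes p m :: nat and q n u v :: int
  assumes "prime p" and "odd p" and "m \<ge> 1" and "q = int p ^ m"
    and "1 \<le> n" and "n \<le> q^2 - 1"
    and "0 \<le> u" and "u \<le> q - 1" and "0 \<le> v" and "v \<le> q - 1"
    and "n = u + v * q"
  shows "[sumIII q n = rhsIII q u v] (mod int p)"
proof -
  interpret LS p m q n u v using assms by unfold_locales
  show ?thesis by (rule main)
qed

end
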